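(* Let $\hat P$ be a partial $r$-differential poset of rank $n$, and let $P$ be the $r$-differential poset obtained from $\hat P$ by iterating Wagner's construction. Write $p_m$ for the rank sizes (which agree for $\hat P$ and $P$ in ranks $\le n$). (i) If $\Delta p_m\ge \Delta p_{m-j-\delta_{r,1}}$ holds for all $1\le m\le n$ and $1\le j\le m$, then $\Delta p_m\ge \Delta p_{m-j-\delta_{r,1}}$ holds in $P$ for all $m\ge1$ and $1\le j\le m$. (ii) If the cokernel of the up map $U_j:\mathbb{Z}^{p_j}\to\mathbb{Z}^{p_{j+1}}$ of $\hat P$ is free abelian for all $0\le j\le n-1$, then the cokernel of $U_m$ in $P$ is free abelian for all $m\ge 0$.
   Context: For a graded poset $Q$ with rank sets $Q_m$, the up map $U_m:\mathbb{Z}^{Q_m}\to\mathbb{Z}^{Q_{m+1}}$ sends each basis element to the sum of the elements covering it, and the down map $D_m:\mathbb{Z}^{Q_m}\to\mathbb{Z}^{Q_{m-1}}$ sends it to the sum of the elements it covers; $DU_m=D_{m+1}U_m$, $UD_m=U_{m-1}D_m$. A partial $r$-differential poset of rank $n$ is a finite graded poset of rank $n$ with a minimum element such that $DU_i-UD_i=rI$ for $i=0,1,\dots,n-1$. Wagner's construction: given such $Q$ of rank $n$, form $Q^+$ of rank $n+1$ by adding, for each $v\in Q_{n-1}$, a new element $v^*$ of rank $n+1$ covering exactly those $x\in Q_n$ that cover $v$, and then adjoining above each $x\in Q_n$ exactly $r$ new elements covering only $x$. Iterating $Q\mapsto Q^+$ indefinitely produces an $r$-differential poset (a graded poset with minimum,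 finite intervals and ranks, in which an element covering $m$ elements is covered by $m+r$, and two distinct elements covering exactly $m$ common elements are covered by exactly $m$ common elements). Here $p_m$ is the number of rank-$m$ elements, $p_k=0$ for $k<0$, $\Delta p_m=p_m-p_{m-1}$, $\delta_{r,1}$ is the Kronecker delta. *)

theory Defs
  imports "HOL-Algebra.Free_Abelian_Groups" "HOL-Algebra.Coset"
begin

text \<open>A finite graded poset with minimum is represented by its rank sets
  R m (elements of rank m) and its cover relation C (C x y: y covers x).
  The partial order is the reflexive-transitive closure of C.\<close>

definition graded_poset_rank :: "nat \<Rightarrow> (nat \<Rightarrow> 'a set) \<Rightarrow> ('a \<Rightarrow> 'a \<Rightarrow> bool) \<Rightarrow> bool" where
  "graded_poset_rank n R C \<longleftrightarrow>
     (\<forall>m. finite (R m)) \<and>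
     (\<forall>m k. m \<noteq> k \<longrightarrow> R m \<inter> R k = {}) \<and>
     (\<forall>m>n. R m = {}) \<and>
     R n \<noteq> {} \<and>
     (\<exists>z. R 0 = {z}) \<and>
     (\<forall>x y. C x y \<longrightarrow> (\<exists>m. x \<in> R m \<and> y \<in> R (Suc m))) \<and>
     (\<forall>m y. y \<in> R (Suc m) \<longrightarrow> (\<exists>x. C x y))"

text \<open>Entry (y,x) of D_{m+1} U_m and of U_{m-1} D_m (for x, y of rank m).\<close>

definition DU_entry :: "(nat \<Rightarrow> 'a set) \<Rightarrow> ('a \<Rightarrow> 'a \<Rightarrow> bool) \<Rightarrow> nat \<Rightarrow> 'a \<Rightarrow> 'a \<Rightarrow> int" where
  "DU_entry R C m y x = (\<Sum>z\<in>R (Suc m). of_bool (C x z) * of_bool (C y z))"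

definition UD_entry :: "(nat \<Rightarrow> 'a set) \<Rightarrow> ('a \<Rightarrow> 'a \<Rightarrow> bool) \<Rightarrow> nat \<Rightarrow> 'a \<Rightarrow> 'a \<Rightarrow> int" where
  "UD_entry R C m y x = (if m = 0 then 0 else (\<Sum>w\<in>R (m - 1). of_bool (C w x) * of_bool (C w y)))"

definition partial_differential_poset :: "nat \<Rightarrow> nat \<Rightarrow> (nat \<Rightarrow> 'a set) \<Rightarrow> ('a \<Rightarrow> 'a \<Rightarrow> bool) \<Rightarrow> bool" where
  "partial_differential_poset r n R C \<longleftrightarrow>
     graded_poset_rank n R C \<and>
     (\<forall>i<n. \<forall>x\<in>R i. \<forall>y\<in>R i. DU_entry R C i y x - UD_entry R C i y x = (if x = y then int r else 0))"

datatype 'a wel = Base 'a | Star "'a wel" | New "'a wel" nat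

definition wagner_step :: "nat \<Rightarrow> nat \<Rightarrow> (nat \<Rightarrow> 'a wel set) \<times> ('a wel \<Rightarrow> 'a wel \<Rightarrow> bool)
    \<Rightarrow> (nat \<Rightarrow> 'a wel set) \<times> ('a wel \<Rightarrow> 'a wel \<Rightarrow> bool)" where
  "wagner_step r n RC = (let R = fst RC; C = snd RC in
     ((\<lambda>m. if m \<le> n then R m
           else if m = Suc n then
             (if n = 0 then {} else Star ` R (n - 1)) \<union> {New x i | x i. x \<in> R n \<and> i < r}
           else {}),
      (\<lambda>x y. C x y
         \<or> (n \<noteq> 0 \<and> (\<exists>v\<in>R (n - 1). y = Star v \<and> x \<in> R n \<and> C v x))
         \<or> (\<exists>i<r. x \<in> R n \<and> y = New x i))))"

fun wagner_iter :: "nat \<Rightarrow> nat \<Rightarrow> nat \<Rightarrow> (nat \<Rightarrow> 'a wel set) \<times> ('a wel \<Rightarrow> 'a wel \<Rightarrow> bool)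
    \<Rightarrow> (nat \<Rightarrow> 'a wel set) \<times> ('a wel \<Rightarrow> 'a wel \<Rightarrow> bool)" where
  "wagner_iter r n 0 RC = RC"
| "wagner_iter r n (Suc k) RC = wagner_step r (n + k) (wagner_iter r n k RC)"

definition embed_poset :: "(nat \<Rightarrow> 'a set) \<Rightarrow> ('a \<Rightarrow> 'a \<Rightarrow> bool) \<Rightarrow> (nat \<Rightarrow> 'a wel set) \<times> ('a wel \<Rightarrow> 'a wel \<Rightarrow> bool)" where
  "embed_poset R C = ((\<lambda>m. Base ` R m), (\<lambda>x y. \<exists>a b. x = Base a \<and> y = Base b \<and> C a b))"

text \<open>The infinite r-differential poset obtained by iterating Wagner's construction
  indefinitely: the union of all iterates.\<close>

definition wagner_ranks :: "nat \<Rightarrow> nat \<Rightarrow> (nat \<Rightarrow> 'a set) \<Rightarrow> ('a \<Rightarrow> 'a \<Rightarrow> bool) \<Rightarrow> nat \<Rightarrow> 'a wel set" where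
  "wagner_ranks r n R C m = (\<Union>k. fst (wagner_iter r n k (embed_poset R C)) m)"

definition wagner_cover :: "nat \<Rightarrow> nat \<Rightarrow> (nat \<Rightarrow> 'a set) \<Rightarrow> ('a \<Rightarrow> 'a \<Rightarrow> bool) \<Rightarrow> 'a wel \<Rightarrow> 'a wel \<Rightarrow> bool" where
  "wagner_cover r n R C x y = (\<exists>k. snd (wagner_iter r n k (embed_poset R C)) x y)"

definition rank_size :: "(nat \<Rightarrow> 'a set) \<Rightarrow> int \<Rightarrow> int" where
  "rank_size R k = (if k < 0 then 0 else int (card (R (nat k))))"

definition delta_rank :: "(nat \<Rightarrow> 'a set) \<Rightarrow> int \<Rightarrow> int" where
  "delta_rank R k = rank_size R k - rank_size R (k - 1)"

definition Zvec :: "'a set \<Rightarrow> ('a \<Rightarrow> int) monoid" where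
  "Zvec A = \<lparr>carrier = {f. \<forall>x. x \<notin> A \<longrightarrow> f x = 0}, monoid.mult = (\<lambda>f g x. f x + g x), one = (\<lambda>x. 0)\<rparr>"

definition up_map :: "(nat \<Rightarrow> 'a set) \<Rightarrow> ('a \<Rightarrow> 'a \<Rightarrow> bool) \<Rightarrow> nat \<Rightarrow> ('a \<Rightarrow> int) \<Rightarrow> ('a \<Rightarrow> int)" where
  "up_map R C m f = (\<lambda>y. if y \<in> R (Suc m) then (\<Sum>x\<in>R m. of_bool (C x y) * f x) else 0)"

definition up_cokernel :: "(nat \<Rightarrow> 'a set) \<Rightarrow> ('a \<Rightarrow> 'a \<Rightarrow> bool) \<Rightarrow> nat \<Rightarrow> ('a \<Rightarrow> int) set monoid" where
  "up_cokernel R C m = Zvec (R (Suc m)) Mod (up_map R C m ` carrier (Zvec (R m)))"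

text \<open>An abelian group is free abelian if it is isomorphic to the free abelian group on
  some set of generators (countably many suffice for the finitely generated groups here).\<close>

definition free_abelian :: "('b, 'c) monoid_scheme \<Rightarrow> bool" where
  "free_abelian G \<longleftrightarrow> comm_group G \<and> (\<exists>S :: nat set. G \<cong> free_Abelian_group S)"

end

theory Submission
  imports Defs
begin


lemma Zvec_carrier: "f \<in> carrier (Zvec A) \<longleftrightarrow> (\<forall>x. x \<notin> A \<longrightarrow> f x = 0)"
  by (simp add: Zvec_def)
lemma Zvec_mult [simp]: "f \<otimes>\<^bsub>Zvec A\<^esub> g = (\<lambda>x. f x + g x)"
  by (simp add: Zvec_def)
lemma Zvec_one [simp]: "\<one>\<^bsub>Zvec A\<^esub> = (\<lambda>x. 0)"
  by (simp add: Zvec_def)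

lemma comm_group_Zvec: "comm_group (Zvec A)"
proof (rule comm_groupI)
  fix x assume "x \<in> carrier (Zvec A)"
  then show "\<exists>y\<in>carrier (Zvec A). y \<otimes>\<^bsub>Zvec A\<^esub> x = \<one>\<^bsub>Zvec A\<^esub>"
    by (intro bexI[of _ "\<lambda>a. - x a"]) (auto simp: Zvec_carrier)
qed (auto simp: Zvec_carrier add.assoc add.commute)

lemma group_Zvec: "group (Zvec A)"
  using comm_group_Zvec comm_group_def by blast

lemma up_map_hom: "up_map R C m \<in> hom (Zvec (R m)) (Zvec (R (Suc m)))"
  by (rule homI) (auto simp: Zvec_carrier up_map_def distrib_left sum.distrib)

lemma free_via_hom:
  assumes h: "h \<in> hom (Zvec B) H" and gH: "group H"
    and surj: "h ` carrier (Zvec B) = carrier H"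
    and ker: "kernel (Zvec B) H h = K"
    and iso: "H \<cong> free_Abelian_group (S::nat set)"
  shows "free_abelian (Zvec B Mod K)"
proof -
  interpret gh: group_hom "Zvec B" H h
    using h gH group_Zvec by (intro group_hom.intro group_hom_axioms.intro) auto
  have "Zvec B Mod K \<cong> H" using gh.FactGroup_iso[OF surj] ker by simp
  then have i: "Zvec B Mod K \<cong> free_Abelian_group S" using iso iso_trans by blast
  have "comm_group (Zvec B Mod K)"
    using comm_group.abelian_FactGroup[OF comm_group_Zvec gh.subgroup_kernel] ker by simp
  with i show ?thesis unfolding free_abelian_def by blast
qed

lemma Zvec_free:
  assumes fin: "finite T"
  shows "Zvec T \<cong> free_Abelian_group {..<card T}"
proof -
  obtain g where g: "bij_betw g {..<card T} T"
    using ex_bij_betw_nat_finite[OF fin] by (auto simp: atLeast0LessThan)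
  define g' where "g' = inv_into {..<card T} g"
  have g'1: "\<And>x. x \<in> T \<Longrightarrow> g' x < card T \<and> g (g' x) = x"
    using g unfolding g'_def bij_betw_def
    by (metis inv_into_into f_inv_into_f lessThan_iff)
  have g'2: "\<And>i. i < card T \<Longrightarrow> g' (g i) = i \<and> g i \<in> T"
    using g unfolding g'_def bij_betw_def
    by (metis inv_into_f_f lessThan_iff imageI)
  define \<phi> where "\<phi> f = Abs_poly_mapping (\<lambda>i. if i < card T then f (g i) else 0)" for f :: "'a \<Rightarrow> int"
  have fin1: "finite {i. (if i < card T then f (g i) else 0) \<noteq> (0::int)}" for f :: "'a \<Rightarrow> int"
    by (rule finite_subset[of _ "{..<card T}"]) auto
  have lk: "Poly_Mapping.lookup (\<phi> f) = (\<lambda>i. if i < card T then f (g i) else 0)" for f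
    unfolding \<phi>_def by (rule lookup_Abs_poly_mapping[OF fin1])
  define \<psi> where "\<psi> c = (\<lambda>x. if x \<in> T then Poly_Mapping.lookup c (g' x) else 0)" for c :: "nat \<Rightarrow>\<^sub>0 int"
  have keys: "Poly_Mapping.keys (\<phi> f) \<subseteq> {..<card T}" for f
  proof
    fix i assume "i \<in> Poly_Mapping.keys (\<phi> f)"
    then have "Poly_Mapping.lookup (\<phi> f) i \<noteq> 0" by (simp add: in_keys_iff)
    then show "i \<in> {..<card T}" by (cases "i < card T") (simp_all add: lk)
  qed
  have add: "\<phi> (\<lambda>x. f x + h x) = \<phi> f + \<phi> h" for f h
    by (rule poly_mapping_eqI) (simp add: lk lookup_add)
  have "\<phi> \<in> iso (Zvec T) (free_Abelian_group {..<card T})"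
  proof (rule isoI)
    show "\<phi> \<in> hom (Zvec T) (free_Abelian_group {..<card T})"
      by (rule homI) (simp_all add: keys add)
    show "bij_betw \<phi> (carrier (Zvec T)) (carrier (free_Abelian_group {..<card T}))"
    proof (rule bij_betwI[where g = \<psi>])
      show "\<phi> \<in> carrier (Zvec T) \<rightarrow> carrier (free_Abelian_group {..<card T})"
        using keys by simp
      show "\<psi> \<in> carrier (free_Abelian_group {..<card T}) \<rightarrow> carrier (Zvec T)"
        by (simp add: \<psi>_def Zvec_carrier)
      show "\<psi> (\<phi> x) = x" if "x \<in> carrier (Zvec T)" for x
      proof
        fix a show "\<psi> (\<phi> x) a = x a"
          using that g'1[of a] by (simp add: \<psi>_def lk Zvec_carrier)
      qed
      show "\<phi> (\<psi> y) = y" if y: "y \<in> carrier (free_Abelian_group {..<card T})" for y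
      proof (rule poly_mapping_eqI)
        fix k show "Poly_Mapping.lookup (\<phi> (\<psi> y)) k = Poly_Mapping.lookup y k"
        proof (cases "k < card T")
          case True then show ?thesis using g'2[of k] by (simp add: lk \<psi>_def)
        next
          case False then show ?thesis using y by (auto simp: lk in_keys_iff)
        qed
      qed
    qed
  qed
  then show ?thesis by (rule is_isoI)
qed



definition inv_wag :: "nat \<Rightarrow> (nat \<Rightarrow> 'a wel set) \<times> ('a wel \<Rightarrow> 'a wel \<Rightarrow> bool) \<Rightarrow> bool" where
 "inv_wag N X \<longleftrightarrow> (\<forall>m. finite (fst X m)) \<and> (\<forall>m k. m \<noteq> k \<longrightarrow> fst X m \<inter> fst X k = {})
   \<and> (\<forall>m>N. fst X m = {}) \<and> (\<forall>x y. snd X x y \<longrightarrow> (\<exists>m<N. x \<in> fst X m \<and> y \<in> fst X (Suc m)))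
   \<and> (\<forall>m w. Star w \<in> fst X m \<longrightarrow> 2 \<le> m \<and> w \<in> fst X (m-2))
   \<and> (\<forall>m w i. New w i \<in> fst X m \<longrightarrow> 1 \<le> m \<and> w \<in> fst X (m-1))"

lemma fst_step: "fst (wagner_step r N X) m = (if m \<le> N then fst X m else if m = Suc N then
   (if N = 0 then {} else Star ` fst X (N - 1)) \<union> {New x i | x i. x \<in> fst X N \<and> i < r} else {})"
  by (simp add: wagner_step_def Let_def)

lemma snd_step: "snd (wagner_step r N X) x y = (snd X x y \<or> (N \<noteq> 0 \<and> (\<exists>v\<in>fst X (N - 1). y = Star v \<and> x \<in> fst X N \<and> snd X v x))
   \<or> (\<exists>i<r. x \<in> fst X N \<and> y = New x i))"
  by (simp add: wagner_step_def Let_def)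

lemma New_set_eq: "{New x i | x i. x \<in> A \<and> i < r} = (\<lambda>(x,i). New x i) ` (A \<times> {..<r})"
  by auto

lemma inv_step:
  assumes I: "inv_wag N X"
  shows "inv_wag (Suc N) (wagner_step r N X)"
proof -
  define R where "R = fst X"
  define R' where "R' = fst (wagner_step r N X)"
  have R'm: "\<And>m. m \<le> N \<Longrightarrow> R' m = R m" by (simp add: R'_def R_def fst_step)
  have R'N: "R' (Suc N) = (if N = 0 then {} else Star ` R (N - 1)) \<union> {New x i | x i. x \<in> R N \<and> i < r}"
    by (simp add: R'_def R_def fst_step)
  have R'big: "\<And>m. m > Suc N \<Longrightarrow> R' m = {}" by (simp add: R'_def R_def fst_step)
  have fin: "\<And>m. finite (R m)" and dis: "\<And>m k. m \<noteq> k \<Longrightarrow> R m \<inter> R k = {}"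
    and emp: "\<And>m. m > N \<Longrightarrow> R m = {}"
    and cov: "\<And>x y. snd X x y \<Longrightarrow> (\<exists>m<N. x \<in> R m \<and> y \<in> R (Suc m))"
    and st: "\<And>m w. Star w \<in> R m \<Longrightarrow> 2 \<le> m \<and> w \<in> R (m-2)"
    and nw: "\<And>m w i. New w i \<in> R m \<Longrightarrow> 1 \<le> m \<and> w \<in> R (m-1)"
    using I unfolding inv_wag_def R_def by blast+
  have finR': "finite (R' m)" for m
  proof -
    consider "m \<le> N" | "m = Suc N" | "m > Suc N" by linarith
    then show ?thesis
    proof cases
      case 2 then show ?thesis using fin by (simp add: R'N New_set_eq)
    qed (use fin R'm R'big in auto)
  qed
  have newdis: "R' (Suc N) \<inter> R' k = {}" if kN: "k \<le> N" for k
  proof (rule ccontr)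
    assume "R' (Suc N) \<inter> R' k \<noteq> {}"
    then obtain y where y1: "y \<in> R' (Suc N)" and y2: "y \<in> R k" using R'm[OF kN] by blast
    from y1 consider v where "N \<noteq> 0" "v \<in> R (N - 1)" "y = Star v" | x i where "x \<in> R N" "y = New x i"
      unfolding R'N by (auto split: if_splits)
    then show False
    proof cases
      case 1
      with y2 st have "2 \<le> k" "v \<in> R (k - 2)" by auto
      moreover have "k - 2 \<noteq> N - 1" using kN \<open>2 \<le> k\<close> 1 by linarith
      ultimately show False using dis[of "k-2" "N-1"] 1 by blast
    next
      case 2
      with y2 nw have "1 \<le> k" "x \<in> R (k - 1)" by auto
      moreover have "k - 1 \<noteq> N" using kN \<open>1 \<le> k\<close> by linarith
      ultimately show False using dis[of "k-1" N] 2 by blast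
    qed
  qed
  have disR': "R' m \<inter> R' k = {}" if "m \<noteq> k" for m k
  proof -
    have "(m \<le> N \<and> k \<le> N) \<or> (m = Suc N \<and> k \<le> N) \<or> (k = Suc N \<and> m \<le> N) \<or> m > Suc N \<or> k > Suc N"
      using that by linarith
    then consider "m \<le> N" "k \<le> N" | "m = Suc N" "k \<le> N" | "k = Suc N" "m \<le> N" | "m > Suc N" | "k > Suc N"
      by blast
    then show ?thesis
    proof cases
      case 1 then show ?thesis using R'm dis that by simp
    next
      case 2 then show ?thesis using newdis by simp
    next
      case 3 then show ?thesis using newdis by blast
    qed (use R'big in auto)
  qed
  have covR': "\<exists>m<Suc N. x \<in> R' m \<and> y \<in> R' (Suc m)" if "snd (wagner_step r N X) x y" for x y
  proof -
    from that consider "snd X x y" | "N \<noteq> 0" "\<exists>v\<in>R (N - 1). y = Star v \<and> x \<in> R N \<and> snd X v x"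
      | "\<exists>i<r. x \<in> R N \<and> y = New x i"
      unfolding snd_step R_def by blast
    then show ?thesis
    proof cases
      case 1
      then obtain m where "m < N" "x \<in> R m" "y \<in> R (Suc m)" using cov by blast
      then show ?thesis using R'm by (intro exI[of _ m]) auto
    next
      case 2 then show ?thesis using R'm[of N] by (intro exI[of _ N]) (auto simp: R'N)
    next
      case 3 then show ?thesis using R'm[of N] by (intro exI[of _ N]) (auto simp: R'N)
    qed
  qed
  have stR': "2 \<le> m \<and> w \<in> R' (m-2)" if "Star w \<in> R' m" for m w
  proof -
    consider "m \<le> N" | "m = Suc N" | "m > Suc N" by linarith
    then show ?thesis
    proof cases
      case 1 then show ?thesis using that st R'm by force
    next
      case 2
      then have "N \<noteq> 0" "w \<in> R (N - 1)" using that by (auto simp: R'N split: if_splits)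
      then show ?thesis using 2 R'm[of "N-1"] by auto
    qed (use that R'big in auto)
  qed
  have nwR': "1 \<le> m \<and> w \<in> R' (m-1)" if "New w i \<in> R' m" for m w i
  proof -
    consider "m \<le> N" | "m = Suc N" | "m > Suc N" by linarith
    then show ?thesis
    proof cases
      case 1 then show ?thesis using that nw R'm by force
    next
      case 2
      then have "w \<in> R N" using that by (auto simp: R'N split: if_splits)
      then show ?thesis using 2 R'm[of "N"] by auto
    qed (use that R'big in auto)
  qed
  show ?thesis unfolding inv_wag_def R'_def[symmetric]
    using finR' disR' R'big covR' stR' nwR' by blast
qed



locale wag =
  fixes r n :: nat and R :: "nat \<Rightarrow> 'a set" and C :: "'a \<Rightarrow> 'a \<Rightarrow> bool"
  assumes graded: "graded_poset_rank n R C"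
begin

abbreviation "X k \<equiv> wagner_iter r n k (embed_poset R C)"
abbreviation "RK k \<equiv> fst (X k)"
abbreviation "CK k \<equiv> snd (X k)"
abbreviation "W \<equiv> wagner_ranks r n R C"
abbreviation "WC \<equiv> wagner_cover r n R C"

lemma RK0: "RK 0 m = Base ` R m" by (simp add: embed_poset_def)
lemma CK0: "CK 0 x y = (\<exists>a b. x = Base a \<and> y = Base b \<and> C a b)" by (simp add: embed_poset_def)

lemma inv0: "inv_wag n (embed_poset R C)"
proof -
  have fin: "\<And>m. finite (R m)" and dis: "\<And>m k. m \<noteq> k \<Longrightarrow> R m \<inter> R k = {}"
    and emp: "\<And>m. m > n \<Longrightarrow> R m = {}" and nn: "R n \<noteq> {}"
    and cov: "\<And>x y. C x y \<Longrightarrow> \<exists>m. x \<in> R m \<and> y \<in> R (Suc m)"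
    using graded unfolding graded_poset_rank_def by blast+
  have cov': "\<exists>m<n. x \<in> R m \<and> y \<in> R (Suc m)" if Cxy: "C x y" for x y
  proof -
    obtain m where m: "x \<in> R m" "y \<in> R (Suc m)" using cov[OF Cxy] by blast
    have "m < n" using emp[of "Suc m"] m by (cases "Suc m > n") auto
    then show ?thesis using m by blast
  qed
  have "Base ` R m \<inter> Base ` R k = {}" if "m \<noteq> k" for m k
    using dis[OF that] by auto
  then show ?thesis unfolding inv_wag_def embed_poset_def
    using fin emp cov' by fastforce
qed

lemma invk: "inv_wag (n + k) (X k)"
proof (induction k)
  case 0 then show ?case using inv0 by simp
next
  case (Suc k) then show ?case using inv_step[of "n+k" "X k" r] by simp
qed

lemma RK_fin: "finite (RK k m)" using invk[of k] unfolding inv_wag_def by blast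
lemma RK_dis: "m \<noteq> m' \<Longrightarrow> RK k m \<inter> RK k m' = {}" using invk[of k] unfolding inv_wag_def by blast
lemma RK_emp: "m > n + k \<Longrightarrow> RK k m = {}" using invk[of k] unfolding inv_wag_def by blast
lemma CK_cov: "CK k x y \<Longrightarrow> \<exists>m<n+k. x \<in> RK k m \<and> y \<in> RK k (Suc m)"
  using invk[of k] unfolding inv_wag_def by blast

lemma RK_Suc_le: "m \<le> n + k \<Longrightarrow> RK (Suc k) m = RK k m"
  by (simp add: fst_step)

lemma RK_stable: "m \<le> n + k \<Longrightarrow> RK (k + d) m = RK k m"
  by (induction d) (simp_all add: fst_step)

lemma W_eq: assumes "m \<le> n + k" shows "W m = RK k m"
proof -
  have "RK k' m \<subseteq> RK k m" for k'
  proof (cases "k' \<le> k")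
    case True
    show ?thesis
    proof (cases "m \<le> n + k'")
      case True
      then show ?thesis using RK_stable[of m k' "k - k'"] \<open>k' \<le> k\<close> by simp
    next
      case False then show ?thesis using RK_emp[of k' m] by simp
    qed
  next
    case False
    then show ?thesis using RK_stable[OF assms, of "k' - k"] by simp
  qed
  then show ?thesis unfolding wagner_ranks_def by blast
qed

lemma W_fin: "finite (W m)" using W_eq[of m m] RK_fin by simp
lemma W_dis: "m \<noteq> m' \<Longrightarrow> W m \<inter> W m' = {}"
  using W_eq[of m "m+m'"] W_eq[of m' "m+m'"] RK_dis[of m m' "m+m'"] by simp

lemma W_low: "m \<le> n \<Longrightarrow> W m = Base ` R m"
  using W_eq[of m 0] RK0 by simp

lemma W_high: assumes "n \<le> m"
  shows "W (Suc m) = (if m = 0 then {} else Star ` W (m - 1)) \<union> {New x i | x i. x \<in> W m \<and> i < r}"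
proof -
  have "W (Suc m) = RK (Suc (m - n)) (Suc m)" using assms by (intro W_eq) simp
  also have "\<dots> = (if m = 0 then {} else Star ` RK (m-n) (m - 1)) \<union> {New x i | x i. x \<in> RK (m-n) m \<and> i < r}"
    using assms by (simp add: fst_step)
  also have "RK (m-n) (m-1) = W (m - 1)" using assms by (intro W_eq[symmetric]) simp
  also have "RK (m-n) m = W m" using assms by (intro W_eq[symmetric]) simp
  finally show ?thesis .
qed

lemma CK_mono: "CK k x y \<Longrightarrow> CK (k + d) x y"
  by (induction d) (simp_all add: snd_step)

lemma WC_iff: "WC x y \<longleftrightarrow> (\<exists>k. CK k x y)" by (simp add: wagner_cover_def)

lemma WC_ranks: assumes "WC x y" shows "\<exists>m. x \<in> W m \<and> y \<in> W (Suc m)"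
proof -
  obtain k where "CK k x y" using assms WC_iff by blast
  then obtain m where "m < n + k" "x \<in> RK k m" "y \<in> RK k (Suc m)" using CK_cov by blast
  then show ?thesis using W_eq[of m k] W_eq[of "Suc m" k] by auto
qed

lemma CK_down: "CK (k + d) x y \<Longrightarrow> y \<in> RK k (Suc m) \<Longrightarrow> Suc m \<le> n + k \<Longrightarrow> CK k x y"
proof (induction d)
  case 0 then show ?case by simp
next
  case (Suc d)
  have yin: "y \<in> RK (Suc (k + d)) (Suc m)"
    using RK_stable[OF Suc.prems(3), of "Suc d"] Suc.prems(2) by simp
  show ?case
  proof (cases "CK (k + d) x y")
    case True then show ?thesis using Suc by blast
  next
    case False
    then have "y \<in> RK (Suc (k + d)) (Suc (n + (k + d)))"
      using Suc.prems(1) by (auto simp: snd_step fst_step)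
    moreover have "Suc m \<noteq> Suc (n + (k + d))" using Suc.prems(3) by simp
    ultimately show ?thesis using RK_dis[of "Suc m" "Suc (n + (k + d))" "Suc (k+d)"] yin by blast
  qed
qed

lemma WC_CK: assumes "WC x y" "y \<in> W (Suc m)" "Suc m \<le> n + k" shows "CK k x y"
proof -
  obtain k' where k': "CK k' x y" using assms WC_iff by blast
  show ?thesis
  proof (cases "k' \<le> k")
    case True then show ?thesis using CK_mono[OF k', of "k - k'"] by simp
  next
    case False
    then have "CK (k + (k' - k)) x y" using k' by simp
    then show ?thesis using CK_down assms W_eq[OF assms(3)] by blast
  qed
qed

lemma CK_Base: "CK k (Base a) (Base b) \<Longrightarrow> C a b"
  by (induction k) (auto simp: snd_step CK0 embed_poset_def)

lemma WC_Base: "WC (Base a) (Base b) \<longleftrightarrow> C a b"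
  using CK_Base WC_iff CK0 by blast

lemma WC_high:
  assumes "n \<le> m" "x \<in> W m" "y \<in> W (Suc m)"
  shows "WC x y \<longleftrightarrow> ((m \<noteq> 0 \<and> (\<exists>v\<in>W (m-1). y = Star v \<and> WC v x)) \<or> (\<exists>i<r. y = New x i))"
proof -
  define k where "k = m - n"
  have nk: "n + k = m" using assms(1) by (simp add: k_def)
  have "WC x y \<longleftrightarrow> CK (Suc k) x y"
  proof
    assume "WC x y" then show "CK (Suc k) x y" using WC_CK[OF _ assms(3), of x "Suc k"] nk by simp
  next
    assume "CK (Suc k) x y" then show "WC x y" using WC_iff by blast
  qed
  also have "\<dots> \<longleftrightarrow> CK k x y \<or> (m \<noteq> 0 \<and> (\<exists>v\<in>RK k (m - 1). y = Star v \<and> x \<in> RK k m \<and> CK k v x))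
      \<or> (\<exists>i<r. x \<in> RK k m \<and> y = New x i)"
    using nk by (simp add: snd_step)
  also have "CK k x y \<longleftrightarrow> False"
  proof -
    have False if ck: "CK k x y"
    proof -
      obtain m' where "m' < n + k" "y \<in> RK k (Suc m')" using CK_cov[OF ck] by blast
      then have "y \<in> W (Suc m')" using W_eq[of "Suc m'" k] by simp
      moreover have "Suc m' \<noteq> Suc m" using \<open>m' < n + k\<close> nk by simp
      ultimately show False using W_dis assms(3) by blast
    qed
    then show ?thesis by blast
  qed
  also have "RK k m = W m" using nk W_eq[of m k] by simp
  also have "RK k (m - 1) = W (m - 1)" using nk W_eq[of "m-1" k] by simp
  also have "(m \<noteq> 0 \<and> (\<exists>v\<in>W (m - 1). y = Star v \<and> x \<in> W m \<and> CK k v x)) \<longleftrightarrow>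
      (m \<noteq> 0 \<and> (\<exists>v\<in>W (m - 1). y = Star v \<and> WC v x))"
  proof -
    have "CK k v x \<longleftrightarrow> WC v x" if "m \<noteq> 0" for v
      using WC_CK[of v x "m - 1" k] assms(2) that nk WC_iff by auto
    then show ?thesis using assms(2) by blast
  qed
  finally show ?thesis using assms(2) by blast
qed

end


lemma arith_part:
  fixes q :: "int \<Rightarrow> int" and r n :: nat
  defines "d \<equiv> of_bool (r = 1) :: int"
  assumes r1: "r \<ge> 1" and qnn: "\<And>k. q k \<ge> 0" and qneg: "\<And>k. k < 0 \<Longrightarrow> q k = 0"
    and rec: "\<And>k. k \<ge> int n + 1 \<Longrightarrow> q k = q (k-2) + int r * q (k-1)"
    and H: "\<And>m j. 1 \<le> m \<Longrightarrow> m \<le> int n \<Longrightarrow> 1 \<le> j \<Longrightarrow> j \<le> m \<Longrightarrow>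
               q m - q (m-1) \<ge> q (m-j-d) - q (m-j-d-1)"
  shows "1 \<le> m \<Longrightarrow> 1 \<le> j \<Longrightarrow> j \<le> m \<Longrightarrow> q m - q (m-1) \<ge> q (m-j-d) - q (m-j-d-1)"
proof -
  have d01: "d = 0 \<or> d = 1" by (simp add: d_def)
  have mono1: "q (k-1) \<le> q k" for k
  proof -
    consider "k \<le> 0" | "1 \<le> k" "k \<le> int n" | "k \<ge> int n + 1" by linarith
    then show ?thesis
    proof cases
      case 1 then show ?thesis using qneg[of "k-1"] qnn[of k] by simp
    next
      case 2
      have "q k - q (k-1) \<ge> q (k-k-d) - q (k-k-d-1)" using H[of k k] 2 by simp
      moreover have "q (k-k-d-1) = 0" using d01 by (intro qneg) auto
      ultimately show ?thesis using qnn[of "k-k-d"] by simp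
    next
      case 3
      have "int r * q (k-1) \<ge> 1 * q (k-1)" using r1 qnn[of "k-1"] by (intro mult_right_mono) auto
      then show ?thesis using rec[OF 3] qnn[of "k-2"] by simp
    qed
  qed
  have mono: "q a \<le> q (a + int e)" for a e
  proof (induction e)
    case 0 then show ?case by simp
  next
    case (Suc e) then show ?case using mono1[of "a + int (Suc e)"] by simp
  qed
  have monoab: "a \<le> b \<Longrightarrow> q a \<le> q b" for a b
    using mono[of a "nat (b - a)"] by simp
  assume m1: "1 \<le> m" and j1: "1 \<le> j" and jm: "j \<le> m"
  show ?thesis
  proof (cases "m \<le> int n")
    case True then show ?thesis using H m1 j1 jm by blast
  next
    case False
    then have mn: "m \<ge> int n + 1" by simp
    define t where "t = m - j - d"
    have dt: "q t - q (t - 1) \<le> q t" using qnn[of "t-1"] by simp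
    show ?thesis
    proof (cases "r = 1")
      case True
      then have "d = 1" by (simp add: d_def)
      then have "t \<le> m - 2" using j1 by (simp add: t_def)
      then have "q t \<le> q (m-2)" by (rule monoab)
      moreover have "q m - q (m-1) = q (m-2)" using rec[OF mn] True by simp
      ultimately show ?thesis using dt by (simp add: t_def)
    next
      case False
      then have "d = 0" "r \<ge> 2" using r1 by (auto simp: d_def)
      then have "t \<le> m - 1" using j1 by (simp add: t_def)
      then have "q t \<le> q (m-1)" by (rule monoab)
      moreover have "int r * q (m-1) \<ge> 2 * q (m-1)" using \<open>r \<ge> 2\<close> qnn[of "m-1"] by (intro mult_right_mono) auto
      moreover have "q m - q (m-1) = q (m-2) + (int r * q (m-1) - q (m-1))" using rec[OF mn] by simp
      ultimately show ?thesis using dt qnn[of "m-2"] \<open>d = 0\<close> by (simp add: t_def)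
    qed
  qed
qed

context wag begin

lemma card_low: "k \<le> int n \<Longrightarrow> rank_size W k = rank_size R k"
proof -
  assume k: "k \<le> int n"
  show ?thesis
  proof (cases "k < 0")
    case False
    then have "W (nat k) = Base ` R (nat k)" using k by (intro W_low) simp
    then have "card (W (nat k)) = card (R (nat k))" by (simp add: card_image inj_on_def)
    then show ?thesis by (simp add: rank_size_def)
  qed (simp add: rank_size_def)
qed

lemma card_high: assumes "n \<le> m"
  shows "card (W (Suc m)) = (if m = 0 then 0 else card (W (m - 1))) + card (W m) * r"
proof -
  define S1 where "S1 = (if m = 0 then {} else Star ` W (m - 1))"
  define S2 where "S2 = (\<lambda>(x,i). New x i) ` (W m \<times> {..<r})"
  have eq: "W (Suc m) = S1 \<union> S2" unfolding S1_def S2_def using W_high[OF assms] by auto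
  have f1: "finite S1" unfolding S1_def using W_fin by simp
  have f2: "finite S2" unfolding S2_def using W_fin by simp
  have d: "S1 \<inter> S2 = {}" unfolding S1_def S2_def by auto
  have c1: "card S1 = (if m = 0 then 0 else card (W (m - 1)))"
    unfolding S1_def by (simp add: card_image inj_on_def)
  have "inj_on (\<lambda>(x,i). New x i) (W m \<times> {..<r})" by (auto simp: inj_on_def)
  then have c2: "card S2 = card (W m) * r" unfolding S2_def by (simp add: card_image card_cartesian_product)
  show ?thesis using eq card_Un_disjoint[OF f1 f2 d] c1 c2 by simp
qed

lemma card_rec: assumes k: "k \<ge> int n + 1"
  shows "rank_size W k = rank_size W (k-2) + int r * rank_size W (k-1)"
proof -
  define m where "m = nat (k - 1)"
  have km: "k = int m + 1" and mn: "n \<le> m" using k by (auto simp: m_def)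
  have nk: "nat k = Suc m" using km by simp
  have a: "rank_size W k = int (card (W (Suc m)))" using km nk by (simp add: rank_size_def)
  have b: "rank_size W (k-1) = int (card (W m))" using km by (simp add: rank_size_def)
  have c: "rank_size W (k-2) = (if m = 0 then 0 else int (card (W (m - 1))))"
    using km by (auto simp: rank_size_def nat_diff_distrib')
  show ?thesis using a b c card_high[OF mn] by (simp add: algebra_simps)
qed

end


context wag begin

lemma coker_low:
  assumes mn: "m < n" and fr: "free_abelian (up_cokernel R C m)"
  shows "free_abelian (up_cokernel W WC m)"
proof -
  define KR where "KR = up_map R C m ` carrier (Zvec (R m))"
  define KW where "KW = up_map W WC m ` carrier (Zvec (W m))"
  define G where "G = Zvec (R (Suc m))"
  define H where "H = G Mod KR"
  define pull :: "('a wel \<Rightarrow> int) \<Rightarrow> 'a \<Rightarrow> int" where "pull f = (\<lambda>a. f (Base a))" for f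
  define push :: "('a \<Rightarrow> int) \<Rightarrow> 'a wel \<Rightarrow> int" where
    "push g = (\<lambda>w. case w of Base a \<Rightarrow> g a | _ \<Rightarrow> 0)" for g
  define h where "h f = KR #>\<^bsub>G\<^esub> pull f" for f
  have Wm: "W m = Base ` R m" and WS: "W (Suc m) = Base ` R (Suc m)" using mn W_low[of m] W_low[of "Suc m"] by auto
  obtain S :: "nat set" where iso: "H \<cong> free_Abelian_group S"
    using fr unfolding free_abelian_def up_cokernel_def H_def G_def KR_def by blast
  interpret G: comm_group G unfolding G_def by (rule comm_group_Zvec)
  interpret uh: group_hom "Zvec (R m)" G "up_map R C m"
    unfolding G_def by (intro group_hom.intro group_hom_axioms.intro group_Zvec up_map_hom)
  have sub: "subgroup KR G" unfolding KR_def by (rule uh.img_is_subgroup)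
  then have nrm: "KR \<lhd> G" by (rule G.subgroup_imp_normal)
  have gH: "group H" unfolding H_def by (rule normal.factorgroup_is_group[OF nrm])
  have pullc: "pull f \<in> carrier G" if "f \<in> carrier (Zvec (W (Suc m)))" for f
    using that unfolding G_def pull_def Zvec_carrier WS by auto
  have pushc: "push g \<in> carrier (Zvec (W k))" if "g \<in> carrier (Zvec (R k))" "k \<le> n" for g k
    using that W_low[OF that(2)] unfolding push_def Zvec_carrier by (auto split: wel.splits)
  have pullpush: "pull (push g) = g" for g by (simp add: pull_def push_def)
  have pushpull: "push (pull f) = f" if "f \<in> carrier (Zvec (W (Suc m)))" for f
  proof
    fix w show "push (pull f) w = f w"
      using that unfolding push_def pull_def Zvec_carrier WS by (cases w) auto
  qed
  have pullc': "pull g \<in> carrier (Zvec (R m))" if "g \<in> carrier (Zvec (W m))" for g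
    using that unfolding pull_def Zvec_carrier Wm by auto
  have sumeq: "(\<Sum>x\<in>W m. of_bool (WC x (Base b)) * g x) = (\<Sum>a\<in>R m. of_bool (C a b) * g (Base a))" for g b
    unfolding Wm by (subst sum.reindex) (auto simp: inj_on_def WC_Base)
  have id1: "pull (up_map W WC m g) = up_map R C m (pull g)" for g
  proof
    fix b show "pull (up_map W WC m g) b = up_map R C m (pull g) b"
      unfolding pull_def up_map_def using sumeq[of b g] WS by auto
  qed
  have id2: "up_map W WC m (push g) = push (up_map R C m g)" for g
  proof
    fix y show "up_map W WC m (push g) y = push (up_map R C m g) y"
    proof (cases "y \<in> W (Suc m)")
      case True
      then obtain b where b: "y = Base b" "b \<in> R (Suc m)" using WS by auto
      show ?thesis using sumeq[of b "push g"] b WS unfolding up_map_def by (simp add: push_def)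
    next
      case False
      then show ?thesis using WS unfolding up_map_def push_def by (cases y) auto
    qed
  qed
  have hom: "h \<in> hom (Zvec (W (Suc m))) H"
  proof (rule homI)
    fix f assume "f \<in> carrier (Zvec (W (Suc m)))"
    then show "h f \<in> carrier H" unfolding h_def H_def
      using hom_in_carrier[OF normal.r_coset_hom_Mod[OF nrm] pullc] by simp
  next
    fix f g assume f: "f \<in> carrier (Zvec (W (Suc m)))" and g: "g \<in> carrier (Zvec (W (Suc m)))"
    have "pull (f \<otimes>\<^bsub>Zvec (W (Suc m))\<^esub> g) = pull f \<otimes>\<^bsub>G\<^esub> pull g" by (simp add: pull_def G_def)
    then show "h (f \<otimes>\<^bsub>Zvec (W (Suc m))\<^esub> g) = h f \<otimes>\<^bsub>H\<^esub> h g"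
      unfolding h_def H_def using hom_mult[OF normal.r_coset_hom_Mod[OF nrm] pullc[OF f] pullc[OF g]] by simp
  qed
  have surj: "h ` carrier (Zvec (W (Suc m))) = carrier H"
  proof
    show "h ` carrier (Zvec (W (Suc m))) \<subseteq> carrier H" using hom_in_carrier[OF hom] by blast
  next
    show "carrier H \<subseteq> h ` carrier (Zvec (W (Suc m)))"
    proof
      fix X assume "X \<in> carrier H"
      then obtain g where g: "g \<in> carrier G" "X = KR #>\<^bsub>G\<^esub> g"
        unfolding H_def FactGroup_def RCOSETS_def by auto
      have "push g \<in> carrier (Zvec (W (Suc m)))" using pushc[of g "Suc m"] g mn unfolding G_def by simp
      moreover have "h (push g) = X" using g by (simp add: h_def pullpush)
      ultimately show "X \<in> h ` carrier (Zvec (W (Suc m)))" by blast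
    qed
  qed
  have ker: "kernel (Zvec (W (Suc m))) H h = KW"
  proof -
    have "f \<in> KW \<longleftrightarrow> pull f \<in> KR" if f: "f \<in> carrier (Zvec (W (Suc m)))" for f
    proof
      assume "f \<in> KW"
      then obtain g where "g \<in> carrier (Zvec (W m))" "f = up_map W WC m g" unfolding KW_def by blast
      then show "pull f \<in> KR" unfolding KR_def using id1 pullc' by blast
    next
      assume "pull f \<in> KR"
      then obtain g where g: "g \<in> carrier (Zvec (R m))" "pull f = up_map R C m g" unfolding KR_def by blast
      have "f = push (pull f)" using pushpull[OF f] by simp
      also have "\<dots> = up_map W WC m (push g)" using g id2 by simp
      finally show "f \<in> KW" unfolding KW_def using pushc[OF g(1)] mn by auto
    qed
    moreover have "h f = \<one>\<^bsub>H\<^esub> \<longleftrightarrow> pull f \<in> KR" if f: "f \<in> carrier (Zvec (W (Suc m)))" for f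
    proof -
      have "\<one>\<^bsub>H\<^esub> = KR" unfolding H_def by simp
      then show ?thesis unfolding h_def
        using G.coset_join1[OF _ pullc[OF f] sub] G.coset_join2[OF pullc[OF f] sub] by auto
    qed
    moreover have "KW \<subseteq> carrier (Zvec (W (Suc m)))"
      unfolding KW_def using hom_in_carrier[OF up_map_hom] by blast
    ultimately show ?thesis unfolding kernel_def by (auto simp del: Zvec_one)
  qed
  show ?thesis unfolding up_cokernel_def KW_def[symmetric]
    using free_via_hom[OF hom gH surj ker iso] .
qed

end


context wag begin

lemma up_New: assumes "n \<le> m" "x' \<in> W m" "i < r"
  shows "up_map W WC m g (New x' i) = g x'"
proof -
  have inS: "New x' i \<in> W (Suc m)" using W_high[OF assms(1)] assms by auto
  have "\<And>x. x \<in> W m \<Longrightarrow> WC x (New x' i) \<longleftrightarrow> x = x'"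
    using WC_high[OF assms(1) _ inS] assms(3) by auto
  then have "(\<Sum>x\<in>W m. of_bool (WC x (New x' i)) * g x) = (\<Sum>x\<in>W m. if x = x' then g x else 0)"
    by (intro sum.cong) auto
  also have "\<dots> = g x'" using assms(2) W_fin by (simp add: sum.delta')
  finally show ?thesis using inS by (simp add: up_map_def)
qed

lemma up_Star: assumes "n \<le> m" "m \<noteq> 0" "v \<in> W (m - 1)"
  shows "up_map W WC m g (Star v) = (\<Sum>x\<in>W m. of_bool (WC v x) * g x)"
proof -
  have inS: "Star v \<in> W (Suc m)" using W_high[OF assms(1)] assms by auto
  have "\<And>x. x \<in> W m \<Longrightarrow> WC x (Star v) \<longleftrightarrow> WC v x"
    using WC_high[OF assms(1) _ inS] assms(2,3) by auto
  then show ?thesis using inS by (auto simp: up_map_def intro!: sum.cong)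
qed

lemma coker_high:
  assumes mn: "n \<le> m" and r1: "r \<ge> 1"
  shows "free_abelian (up_cokernel W WC m)"
proof -
  define A where "A = W m"
  define B where "B = W (Suc m)"
  define KW where "KW = up_map W WC m ` carrier (Zvec A)"
  define N0 where "N0 = {New x 0 | x. x \<in> A}"
  define T where "T = B - N0"
  define c :: "'a wel \<Rightarrow> 'a wel \<Rightarrow> int" where
    "c y x = (case y of Star v \<Rightarrow> of_bool (WC v x) | New x' i \<Rightarrow> of_bool (x = x') | Base _ \<Rightarrow> 0)" for y x
  define h where "h f = (\<lambda>y. if y \<in> T then f y - (\<Sum>x\<in>A. c y x * f (New x 0)) else 0)" for f
  have Bstr: "y \<in> B \<longleftrightarrow> (m \<noteq> 0 \<and> (\<exists>v\<in>W (m-1). y = Star v)) \<or> (\<exists>x i. x \<in> A \<and> i < r \<and> y = New x i)" for y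
    unfolding B_def A_def using W_high[OF mn] by auto
  have finT: "finite T" unfolding T_def B_def using W_fin by simp
  have hom: "h \<in> hom (Zvec B) (Zvec T)"
  proof (rule homI)
    fix f assume "f \<in> carrier (Zvec B)" then show "h f \<in> carrier (Zvec T)"
      by (simp add: h_def Zvec_carrier)
  next
    fix f g assume "f \<in> carrier (Zvec B)" "g \<in> carrier (Zvec B)"
    show "h (f \<otimes>\<^bsub>Zvec B\<^esub> g) = h f \<otimes>\<^bsub>Zvec T\<^esub> h g"
      by (auto simp: h_def distrib_left sum.distrib)
  qed
  have surj: "h ` carrier (Zvec B) = carrier (Zvec T)"
  proof
    show "h ` carrier (Zvec B) \<subseteq> carrier (Zvec T)" using hom_in_carrier[OF hom] by blast
  next
    show "carrier (Zvec T) \<subseteq> h ` carrier (Zvec B)"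
    proof
      fix t assume t: "t \<in> carrier (Zvec T)"
      have tB: "t \<in> carrier (Zvec B)" using t unfolding Zvec_carrier T_def by auto
      have "t (New x 0) = 0" if "x \<in> A" for x
        using t that unfolding Zvec_carrier T_def N0_def by auto
      then have "h t = t" using t unfolding h_def Zvec_carrier by (auto intro!: sum.neutral)
      then show "t \<in> h ` carrier (Zvec B)" using tB by force
    qed
  qed
  have ker: "kernel (Zvec B) (Zvec T) h = KW"
  proof
    show "KW \<subseteq> kernel (Zvec B) (Zvec T) h"
    proof
      fix f assume "f \<in> KW"
      then obtain g where g: "g \<in> carrier (Zvec A)" "f = up_map W WC m g" unfolding KW_def by blast
      have fc: "f \<in> carrier (Zvec B)" using g hom_in_carrier[OF up_map_hom] unfolding A_def B_def by blast
      have f0: "f (New x 0) = g x" if "x \<in> A" for x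
        using g up_New[OF mn, of x 0] that r1 unfolding A_def by simp
      have "h f y = 0" for y
      proof (cases "y \<in> T")
        case True
        then have "y \<in> B" unfolding T_def by simp
        then consider v where "m \<noteq> 0" "v \<in> W (m-1)" "y = Star v" | x i where "x \<in> A" "i < r" "y = New x i"
          using Bstr by blast
        then show ?thesis
        proof cases
          case 1
          have "f y = (\<Sum>x\<in>A. of_bool (WC v x) * g x)" using up_Star[OF mn 1(1,2)] g 1 unfolding A_def by simp
          also have "\<dots> = (\<Sum>x\<in>A. c y x * f (New x 0))" using f0 1 by (auto simp: c_def intro!: sum.cong)
          finally show ?thesis using True by (simp add: h_def)
        next
          case 2
          have "f y = g x" using up_New[OF mn, of x i g] g 2 unfolding A_def by simp
          also have "\<dots> = (\<Sum>x'\<in>A. if x' = x then f (New x' 0) else 0)" using f0 2 W_fin unfolding A_def by (simp add: sum.delta')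
          also have "\<dots> = (\<Sum>x'\<in>A. c y x' * f (New x' 0))" using 2 by (auto simp: c_def intro!: sum.cong)
          finally show ?thesis using True by (simp add: h_def)
        qed
      qed (simp add: h_def)
      then show "f \<in> kernel (Zvec B) (Zvec T) h" using fc unfolding kernel_def by auto
    qed
  next
    show "kernel (Zvec B) (Zvec T) h \<subseteq> KW"
    proof
      fix f assume "f \<in> kernel (Zvec B) (Zvec T) h"
      then have fc: "f \<in> carrier (Zvec B)" and hf: "h f = (\<lambda>y. 0)" unfolding kernel_def by auto
      have hy: "f y = (\<Sum>x\<in>A. c y x * f (New x 0))" if "y \<in> T" for y
        using fun_cong[OF hf, of y] that by (simp add: h_def)
      define g where "g x = (if x \<in> A then f (New x 0) else 0)" for x
      have gc: "g \<in> carrier (Zvec A)" by (simp add: g_def Zvec_carrier)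
      have "up_map W WC m g = f"
      proof
        fix y show "up_map W WC m g y = f y"
        proof (cases "y \<in> B")
          case False then show ?thesis using fc unfolding up_map_def Zvec_carrier B_def by simp
        next
          case True
          then consider v where "m \<noteq> 0" "v \<in> W (m-1)" "y = Star v" | x i where "x \<in> A" "i < r" "y = New x i"
            using Bstr by blast
          then show ?thesis
          proof cases
            case 1
            have yT: "y \<in> T" using True 1 unfolding T_def N0_def by auto
            have "up_map W WC m g y = (\<Sum>x\<in>A. of_bool (WC v x) * g x)" using up_Star[OF mn 1(1,2)] 1 unfolding A_def by simp
            also have "\<dots> = (\<Sum>x\<in>A. c y x * f (New x 0))" using 1 by (auto simp: c_def g_def intro!: sum.cong)
            also have "\<dots> = f y" using hy[OF yT] by simp
            finally show ?thesis .
          next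
            case 2
            have "up_map W WC m g y = f (New x 0)" using up_New[OF mn, of x i g] 2 unfolding A_def g_def by simp
            also have "\<dots> = f y"
            proof (cases "i = 0")
              case True then show ?thesis using 2 by simp
            next
              case False
              have yT: "y \<in> T" using True 2 False unfolding T_def N0_def by auto
              have "f y = (\<Sum>x'\<in>A. c y x' * f (New x' 0))" using hy[OF yT] .
              also have "\<dots> = (\<Sum>x'\<in>A. if x' = x then f (New x' 0) else 0)" using 2 by (auto simp: c_def intro!: sum.cong)
              also have "\<dots> = f (New x 0)" using 2 W_fin unfolding A_def by (simp add: sum.delta')
              finally show ?thesis by simp
            qed
            finally show ?thesis .
          qed
        qed
      qed
      then show "f \<in> KW" unfolding KW_def using gc by blast
    qed
  qed
  show ?thesis unfolding up_cokernel_def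
    using free_via_hom[OF hom group_Zvec surj ker Zvec_free[OF finT]] unfolding KW_def A_def B_def .
qed

end


theorem proposition4p1:
  fixes r n :: nat and R :: "nat \<Rightarrow> 'a set" and C :: "'a \<Rightarrow> 'a \<Rightarrow> bool"
  assumes r_pos: "r \<ge> 1"
    and hatP: "partial_differential_poset r n R C"
  shows "((\<forall>m j :: int. 1 \<le> m \<and> m \<le> int n \<and> 1 \<le> j \<and> j \<le> m \<longrightarrow>
             delta_rank R m \<ge> delta_rank R (m - j - of_bool (r = 1)))
          \<longrightarrow> (\<forall>m j :: int. 1 \<le> m \<and> 1 \<le> j \<and> j \<le> m \<longrightarrow>
             delta_rank (wagner_ranks r n R C) m
               \<ge> delta_rank (wagner_ranks r n R C) (m - j - of_bool (r = 1))))
       \<and> ((\<forall>j<n. free_abelian (up_cokernel R C j))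
          \<longrightarrow> (\<forall>m. free_abelian (up_cokernel (wagner_ranks r n R C) (wagner_cover r n R C) m)))"
proof -
  have gr: "graded_poset_rank n R C" using hatP unfolding partial_differential_poset_def by blast
  interpret wag r n R C using gr by unfold_locales
  define q where "q = rank_size W"
  have qnn: "\<And>k. q k \<ge> 0" by (simp add: q_def rank_size_def)
  have qneg: "\<And>k. k < 0 \<Longrightarrow> q k = 0" by (simp add: q_def rank_size_def)
  have rec: "\<And>k. k \<ge> int n + 1 \<Longrightarrow> q k = q (k-2) + int r * q (k-1)"
    unfolding q_def by (rule card_rec)
  have dlow: "delta_rank R k = q k - q (k - 1)" if "k \<le> int n" for k
    using card_low[of k] card_low[of "k-1"] that unfolding delta_rank_def q_def by simp
  have part1: "(\<forall>m j :: int. 1 \<le> m \<and> m \<le> int n \<and> 1 \<le> j \<and> j \<le> m \<longrightarrow>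
             delta_rank R m \<ge> delta_rank R (m - j - of_bool (r = 1)))
          \<longrightarrow> (\<forall>m j :: int. 1 \<le> m \<and> 1 \<le> j \<and> j \<le> m \<longrightarrow>
             delta_rank W m \<ge> delta_rank W (m - j - of_bool (r = 1)))"
  proof (intro impI allI)
    assume Hyp: "\<forall>m j :: int. 1 \<le> m \<and> m \<le> int n \<and> 1 \<le> j \<and> j \<le> m \<longrightarrow>
             delta_rank R m \<ge> delta_rank R (m - j - of_bool (r = 1))"
    have H: "q m - q (m-1) \<ge> q (m-j-of_bool (r = 1)) - q (m-j-of_bool (r = 1)-1)"
      if "1 \<le> m" "m \<le> int n" "1 \<le> j" "j \<le> m" for m j
    proof -
      have a: "delta_rank R (m-j-of_bool (r = 1)) \<le> delta_rank R m" using Hyp that by blast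
      have b: "m - j - of_bool (r = 1) \<le> int n" using that by simp
      show ?thesis using a unfolding dlow[OF that(2)] dlow[OF b] .
    qed
    fix m j :: int
    assume mj: "1 \<le> m \<and> 1 \<le> j \<and> j \<le> m"
    show "delta_rank W m \<ge> delta_rank W (m - j - of_bool (r = 1))"
      using arith_part[of r q n m j, OF r_pos qnn qneg rec H] mj unfolding delta_rank_def q_def by blast
  qed
  have part2: "(\<forall>j<n. free_abelian (up_cokernel R C j)) \<longrightarrow> (\<forall>m. free_abelian (up_cokernel W WC m))"
  proof (intro impI allI)
    fix m assume F: "\<forall>j<n. free_abelian (up_cokernel R C j)"
    show "free_abelian (up_cokernel W WC m)"
    proof (cases "m < n")
      case True then show ?thesis using coker_low F by blast
    next
      case False then show ?thesis using coker_high r_pos by simp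
    qed
  qed
  show ?thesis using part1 part2 by blast
qed

end
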